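(* Let $A\in\mathbb{R}^{n\times n}$ be a constant matrix all of whose eigenvalues are real, and let $C:\mathbb{R}_{\geq0}\to\mathbb{R}^{m\times n}$ be continuous and bounded. Write $A=S+N$ where $S$ is diagonalizable, $N$ is nilpotent with index $s\leq n$, and $SN=NS$ (the Jordan–Chevalley decomposition). Let $\mathcal{O}(t)\in\mathbb{R}^{r\times n}$ ($r>0$) be a matrix whose rows are row vectors chosen from $C(t),\,C(t)N,\,\dots,\,C(t)N^{s-1}$. Suppose there exist constants $\delta,\mu>0$ such that $$\int_t^{t+\delta}\mathcal{O}(\tau)^\top\mathcal{O}(\tau)\,d\tau>\mu I_n\quad\text{for all } t\geq0.$$ Then the pair $(A,C(t))$ is uniformly observable.
   Context: A pair $(A(t),C(t))$ of continuous bounded matrix functions is uniformly observable if there exist $\delta,\mu>0$ such that $\frac1\delta\int_t^{t+\delta}\Phi(\tau,t)^\top C(\tau)^\top C(\tau)\Phi(\tau,t)\,d\tau\geq\mu I_n$ for all $t\geq0$, where $\Phi$ is the state transition matrix of $A(t)$ (for constant $A$, $\Phi(\tau,t)=\exp(A(\tau-t))$). *)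

theory Defs
  imports "HOL-Analysis.Analysis"
begin

primrec mpow :: "'a::semiring_1^'n^'n \<Rightarrow> nat \<Rightarrow> 'a^'n^'n" where
  "mpow M 0 = mat 1"
| "mpow M (Suc k) = M ** mpow M k"

definition mexp :: "real^'n^'n \<Rightarrow> real^'n^'n" where
  "mexp M = (\<Sum>k. (1 / fact k) *\<^sub>R mpow M k)"

definition trans_mat :: "real^'n^'n \<Rightarrow> real \<Rightarrow> real \<Rightarrow> real^'n^'n" where
  "trans_mat A \<tau> t = mexp ((\<tau> - t) *\<^sub>R A)"

definition mat_gt :: "real^'n^'n \<Rightarrow> real^'n^'n \<Rightarrow> bool" where
  "mat_gt X Y \<longleftrightarrow> (\<forall>x. x \<noteq> 0 \<longrightarrow> x \<bullet> ((X - Y) *v x) > 0)"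

definition mat_ge :: "real^'n^'n \<Rightarrow> real^'n^'n \<Rightarrow> bool" where
  "mat_ge X Y \<longleftrightarrow> (\<forall>x. x \<bullet> ((X - Y) *v x) \<ge> 0)"

definition eigenvalue :: "real^'n^'n \<Rightarrow> complex \<Rightarrow> bool" where
  "eigenvalue A c \<longleftrightarrow>
     (\<exists>v::complex^'n. v \<noteq> 0 \<and> (\<chi> i j. complex_of_real (A $ i $ j)) *v v = c *s v)"

definition diagonalizable :: "real^'n^'n \<Rightarrow> bool" where
  "diagonalizable S \<longleftrightarrow>
     (\<exists>P::real^'n^'n. invertible P \<and>
        (\<forall>i j. i \<noteq> j \<longrightarrow> (matrix_inv P ** S ** P) $ i $ j = 0))"

definition nilpotent_index :: "real^'n^'n \<Rightarrow> nat \<Rightarrow> bool" where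
  "nilpotent_index N s \<longleftrightarrow> mpow N s = 0 \<and> (\<forall>k<s. mpow N k \<noteq> 0)"

definition uniformly_observable :: "real^'n^'n \<Rightarrow> (real \<Rightarrow> real^'n^'m) \<Rightarrow> bool" where
  "uniformly_observable A C \<longleftrightarrow>
     (\<exists>\<delta>>0. \<exists>\<mu>>0. \<forall>t\<ge>0.
        mat_ge ((1 / \<delta>) *\<^sub>R integral {t..t+\<delta>}
                  (\<lambda>\<tau>. transpose (trans_mat A \<tau> t) ** transpose (C \<tau>) ** C \<tau> ** trans_mat A \<tau> t))
               (\<mu> *\<^sub>R mat 1))"

end

theory Submission
  imports Defs
begin


lemma scaleR_mvmul: "(r *\<^sub>R (M::real^'n^'m)) *v x = r *\<^sub>R (M *v x)"
  by (simp add: matrix_vector_mult_def vec_eq_iff sum_distrib_left algebra_simps)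
lemma mvmul_scaleR: "(M::real^'n^'m) *v (r *\<^sub>R x) = r *\<^sub>R (M *v x)"
  by (simp add: matrix_vector_mult_def vec_eq_iff sum_distrib_left algebra_simps)
lemma scaleR_mmul: "(r *\<^sub>R (M::real^'n^'m)) ** (K::real^'k^'n) = r *\<^sub>R (M ** K)"
  by (simp add: matrix_matrix_mult_def vec_eq_iff sum_distrib_left algebra_simps)
lemma mmul_scaleR: "(M::real^'n^'m) ** (r *\<^sub>R (K::real^'k^'n)) = r *\<^sub>R (M ** K)"
  by (simp add: matrix_matrix_mult_def vec_eq_iff sum_distrib_left algebra_simps)

lemma mat_norm_le_onorm: "norm (M::real^'n^'m) \<le> real CARD('m) * real CARD('n) * onorm ((*v) M)"
proof -
  have "norm M \<le> (\<Sum>i\<in>UNIV. norm (M$i))"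
    unfolding norm_vec_def by (rule L2_set_le_sum) auto
  also have "\<dots> \<le> (\<Sum>i\<in>(UNIV::'m set). \<Sum>j\<in>(UNIV::'n set). \<bar>M$i$j\<bar>)"
    by (intro sum_mono norm_le_l1_cart)
  also have "\<dots> \<le> (\<Sum>i\<in>(UNIV::'m set). \<Sum>j\<in>(UNIV::'n set). onorm ((*v) M))"
    by (intro sum_mono matrix_component_le_onorm)
  finally show ?thesis by simp
qed

lemma onorm_le_mat_norm: "onorm ((*v) (M::real^'n^'m)) \<le> real CARD('m) * real CARD('n) * norm M"
proof (rule onorm_le_matrix_component)
  fix i j
  have "\<bar>M$i$j\<bar> \<le> norm (M$i)" by (rule component_le_norm_cart)
  also have "\<dots> \<le> norm M" unfolding norm_vec_def[of M] by (rule member_le_L2_set) simp_all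
  finally show "\<bar>M$i$j\<bar> \<le> norm M" .
qed

typedef 'n sq = "UNIV :: (real^'n^'n) set" morphisms mat_of sq_of by auto
setup_lifting type_definition_sq

instantiation sq :: (finite) "{real_normed_vector, ring_1}"
begin
lift_definition zero_sq :: "'a sq" is 0 .
lift_definition one_sq :: "'a sq" is "mat 1" .
lift_definition plus_sq :: "'a sq \<Rightarrow> 'a sq \<Rightarrow> 'a sq" is "(+)" .
lift_definition minus_sq :: "'a sq \<Rightarrow> 'a sq \<Rightarrow> 'a sq" is "(-)" .
lift_definition uminus_sq :: "'a sq \<Rightarrow> 'a sq" is "uminus" .
lift_definition times_sq :: "'a sq \<Rightarrow> 'a sq \<Rightarrow> 'a sq" is "(**)" .
lift_definition scaleR_sq :: "real \<Rightarrow> 'a sq \<Rightarrow> 'a sq" is "scaleR" .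
lift_definition norm_sq :: "'a sq \<Rightarrow> real" is "\<lambda>M. onorm ((*v) M)" .
definition sgn_sq :: "'a sq \<Rightarrow> 'a sq" where "sgn_sq x = scaleR (inverse (norm x)) x"
definition dist_sq :: "'a sq \<Rightarrow> 'a sq \<Rightarrow> real" where "dist_sq x y = norm (x - y)"
definition uniformity_sq :: "('a sq \<times> 'a sq) filter" where
  "uniformity_sq = (INF e\<in>{0<..}. principal {(x, y). dist x y < e})"
definition open_sq :: "'a sq set \<Rightarrow> bool" where
  "open_sq U = (\<forall>x\<in>U. \<forall>\<^sub>F (x', y) in uniformity. x' = x \<longrightarrow> y \<in> U)"
instance
proof
  fix a b c :: "'a sq" and r q :: real
  show "a + b + c = a + (b + c)" by transfer (simp add: algebra_simps)
  show "a + b = b + a" by transfer (simp add: algebra_simps)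
  show "0 + a = a" by transfer simp
  show "- a + a = 0" by transfer simp
  show "a - b = a + - b" by transfer simp
  show "r *\<^sub>R (a + b) = r *\<^sub>R a + r *\<^sub>R b" by transfer (simp add: scaleR_right_distrib)
  show "(r + q) *\<^sub>R a = r *\<^sub>R a + q *\<^sub>R a" by transfer (simp add: scaleR_left_distrib)
  show "r *\<^sub>R q *\<^sub>R a = (r * q) *\<^sub>R a" by transfer simp
  show "1 *\<^sub>R a = a" by transfer simp
  show "dist a b = norm (a - b)" by (simp add: dist_sq_def)
  show "sgn a = inverse (norm a) *\<^sub>R a" by (simp add: sgn_sq_def)
  show "(uniformity :: ('a sq \<times> 'a sq) filter) = (INF e\<in>{0<..}. principal {(x, y). dist x y < e})"
    by (simp add: uniformity_sq_def)
  show "open U = (\<forall>x\<in>U. \<forall>\<^sub>F (x', y) in uniformity. x' = x \<longrightarrow> y \<in> U)" for U :: "'a sq set"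
    by (simp add: open_sq_def)
  show "(norm a = 0) = (a = 0)"
    apply transfer
    apply (auto simp: onorm_eq_0)
    by (subst matrix_eq) simp
  show "norm (a + b) \<le> norm a + norm b"
    apply transfer
    subgoal for a b
      using onorm_triangle[OF matrix_vector_mul_bounded_linear matrix_vector_mul_bounded_linear, of a b]
      by (metis (no_types, lifting) ext matrix_vector_mult_add_rdistrib)
    done
  show "norm (r *\<^sub>R a) = \<bar>r\<bar> * norm a"
    apply transfer
    subgoal for r a
    proof -
      have "(*v) (r *\<^sub>R a) = (\<lambda>x. r *\<^sub>R ((*v) a x))" by (rule ext) (simp add: scaleR_mvmul)
      then show ?thesis by (simp add: onorm_scaleR)
    qed
    done
  show "a * b * c = a * (b * c)" by transfer (simp add: matrix_mul_assoc)
  show "(a + b) * c = a * c + b * c" by transfer (simp add: matrix_matrix_mult_def vec_eq_iff sum.distrib algebra_simps)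
  show "a * (b + c) = a * b + a * c" by transfer (simp add: matrix_add_ldistrib)
  show "1 * a = a" by transfer simp
  show "a * 1 = a" by transfer simp
  show "(0::'a sq) \<noteq> 1"
    apply transfer
    apply (simp add: vec_eq_iff mat_def)
    done
qed
end

instance sq :: (finite) real_normed_algebra_1
proof
  fix a b :: "'a sq" and r :: real
  show "r *\<^sub>R a * b = r *\<^sub>R (a * b)" by transfer (simp add: scaleR_mmul)
  show "a * r *\<^sub>R b = r *\<^sub>R (a * b)" by transfer (simp add: mmul_scaleR)
  show "norm (a * b) \<le> norm a * norm b"
    apply transfer
    subgoal for a b
    proof -
      have "(*v) (a ** b) = (*v) a \<circ> (*v) b" by (rule ext) (simp add: matrix_vector_mul_assoc)
      then show ?thesis by (simp add: onorm_compose)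
    qed
    done
  show "norm (1::'a sq) = 1"
    apply transfer
    subgoal
    proof -
      have "(*v) (mat 1::real^'a^'a) = (\<lambda>x. x)" by (rule ext) simp
      then show ?thesis by (simp add: onorm_id)
    qed
    done
qed

lemma norm_sq_eq: "norm (x::'n::finite sq) = onorm ((*v) (mat_of x))"
  by transfer simp

lemma mat_of_diff: "mat_of (x - y) = mat_of x - mat_of y" by transfer simp

instance sq :: (finite) banach
proof
  fix X :: "nat \<Rightarrow> 'a sq"
  assume "Cauchy X"
  define c where "c = real CARD('a) * real CARD('a)"
  have c: "c > 0" by (simp add: c_def)
  have "Cauchy (\<lambda>n. mat_of (X n))"
  proof (rule metric_CauchyI)
    fix e :: real assume e: "e > 0"
    from \<open>Cauchy X\<close> obtain M where M: "\<forall>m\<ge>M. \<forall>n\<ge>M. dist (X m) (X n) < e / c"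
      using metric_CauchyD[of X "e/c"] e c by auto
    show "\<exists>M. \<forall>m\<ge>M. \<forall>n\<ge>M. dist (mat_of (X m)) (mat_of (X n)) < e"
    proof (intro exI allI impI)
      fix m n assume "m \<ge> M" "n \<ge> M"
      then have "dist (X m) (X n) < e / c" using M by auto
      then have "c * norm (X m - X n) < e" using c by (simp add: dist_norm field_simps)
      moreover have "dist (mat_of (X m)) (mat_of (X n)) \<le> c * norm (X m - X n)"
        using mat_norm_le_onorm[of "mat_of (X m) - mat_of (X n)"]
        by (simp add: dist_norm norm_sq_eq mat_of_diff c_def)
      ultimately show "dist (mat_of (X m)) (mat_of (X n)) < e" by simp
    qed
  qed
  then obtain L where L: "(\<lambda>n. mat_of (X n)) \<longlonglongrightarrow> L"
    using convergent_def complete_UNIV by (metis Cauchy_convergent_iff)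
  have "X \<longlonglongrightarrow> sq_of L"
  proof (rule LIMSEQ_I)
    fix e :: real assume e: "e > 0"
    from L obtain M where M: "\<forall>n\<ge>M. norm (mat_of (X n) - L) < e / c"
      using LIMSEQ_D[OF L, of "e/c"] e c by auto
    show "\<exists>M. \<forall>n\<ge>M. norm (X n - sq_of L) < e"
    proof (intro exI allI impI)
      fix n assume "n \<ge> M"
      then have "norm (mat_of (X n) - L) < e / c" using M by auto
      moreover have "norm (X n - sq_of L) \<le> c * norm (mat_of (X n) - L)"
        using onorm_le_mat_norm[of "mat_of (X n) - L"]
        by (simp add: norm_sq_eq mat_of_diff c_def sq_of_inverse)
      ultimately show "norm (X n - sq_of L) < e" using c by (simp add: field_simps)
    qed
  qed
  then show "convergent X" by (auto simp: convergent_def)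
qed


lemma mat_of_mult: "mat_of (x * y) = mat_of x ** mat_of y" by transfer simp
lemma mat_of_one: "mat_of 1 = mat 1" by transfer simp
lemma mat_of_scaleR: "mat_of (r *\<^sub>R x) = r *\<^sub>R mat_of x" by transfer simp
lemma mat_of_add: "mat_of (x + y) = mat_of x + mat_of y" by transfer simp
lemma mat_of_power: "mat_of (x ^ k) = mpow (mat_of x) k"
  by (induction k) (simp_all add: mat_of_mult mat_of_one)

lemma bounded_linear_mat_of: "bounded_linear (mat_of :: 'n::finite sq \<Rightarrow> real^'n^'n)"
proof
  show "mat_of (x + y) = mat_of x + mat_of y" for x y :: "'n sq" by (rule mat_of_add)
  show "mat_of (r *\<^sub>R x) = r *\<^sub>R mat_of x" for r and x :: "'n sq" by (rule mat_of_scaleR)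
  show "\<exists>K. \<forall>x::'n sq. norm (mat_of x) \<le> norm x * K"
    by (rule exI[of _ "real CARD('n) * real CARD('n)"]) (metis norm_sq_eq mat_norm_le_onorm mult.commute)
qed

lemma mexp_sums: "(\<lambda>k. (1 / fact k) *\<^sub>R mpow M k) sums mat_of (exp (sq_of M))"
proof -
  have "(\<lambda>k. mat_of ((sq_of M) ^ k /\<^sub>R fact k)) sums mat_of (exp (sq_of M))"
    by (rule bounded_linear.sums[OF bounded_linear_mat_of exp_converges])
  then show ?thesis by (simp add: mat_of_scaleR mat_of_power sq_of_inverse divide_inverse_commute)
qed

lemma mexp_eq: "mexp M = mat_of (exp (sq_of M))"
  unfolding mexp_def using mexp_sums by (rule sums_unique[symmetric])

lemma sq_of_scaleR: "sq_of (r *\<^sub>R M) = r *\<^sub>R sq_of M" by (metis mat_of_inverse mat_of_scaleR sq_of_inverse UNIV_I)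
lemma sq_of_add: "sq_of (M + K) = sq_of M + sq_of K" by (metis mat_of_inverse mat_of_add sq_of_inverse UNIV_I)
lemma sq_of_mult: "sq_of (M ** K) = sq_of M * sq_of K" by (metis mat_of_inverse mat_of_mult sq_of_inverse UNIV_I)

lemma mexp_add_commuting:
  assumes "M ** K = K ** M"
  shows "mexp (M + K) = mexp M ** mexp K"
proof -
  have "sq_of M * sq_of K = sq_of K * sq_of M" using assms by (metis sq_of_mult)
  then show ?thesis by (simp add: mexp_eq sq_of_add exp_add_commuting mat_of_mult)
qed

lemma mexp_zero: "mexp (0::real^'n::finite^'n) = mat 1"
proof -
  have "sq_of (0::real^'n^'n) = 0" by (metis zero_sq.abs_eq)
  then show ?thesis by (simp add: mexp_eq mat_of_one)
qed

lemma mexp_scaleR_add: "mexp ((a + b) *\<^sub>R M) = mexp (a *\<^sub>R M) ** mexp (b *\<^sub>R M)"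
proof -
  have "(a *\<^sub>R M) ** (b *\<^sub>R M) = (b *\<^sub>R M) ** (a *\<^sub>R M)" by (simp add: scaleR_mmul mmul_scaleR)
  then show ?thesis by (simp add: scaleR_add_left mexp_add_commuting)
qed

lemma continuous_mexp: "continuous_on U (\<lambda>t. mexp (t *\<^sub>R (M::real^'n::finite^'n)))"
proof -
  have "continuous_on U (\<lambda>t. mat_of (exp (t *\<^sub>R sq_of M)))"
  proof (intro bounded_linear.continuous_on[OF bounded_linear_mat_of])
    show "continuous_on U (\<lambda>t. exp (t *\<^sub>R sq_of M))"
      unfolding continuous_on_eq_continuous_within
      using exp_scaleR_has_vector_derivative_right[where A="sq_of M"]
      by (auto simp: has_vector_derivative_def intro: has_derivative_continuous)
  qed
  then show ?thesis by (simp add: mexp_eq sq_of_scaleR)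
qed


lemma mpow_add: "mpow M (a + b) = mpow M a ** mpow M b"
  by (induction a) (simp_all add: matrix_mul_assoc)

lemma mmul_zero_right[simp]: "(M::real^'n^'m) ** (0::real^'k^'n) = 0"
  by (simp add: matrix_matrix_mult_def vec_eq_iff)
lemma mmul_zero_left[simp]: "(0::real^'n^'m) ** (M::real^'k^'n) = 0"
  by (simp add: matrix_matrix_mult_def vec_eq_iff)

lemma mpow_ge:
  assumes "mpow N s = 0" "s \<le> k"
  shows "mpow N k = 0"
proof -
  have "mpow N k = mpow N (k - s) ** mpow N s" using mpow_add[of N "k - s" s] assms(2) by simp
  then show ?thesis using assms(1) by simp
qed

lemma mpow_scaleR: "mpow (r *\<^sub>R (M::real^'n^'n)) k = r ^ k *\<^sub>R mpow M k"
  by (induction k) (simp_all add: scaleR_mmul mmul_scaleR)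

lemma mpow_eigen:
  assumes "(S::real^'n^'n) *v p = d *\<^sub>R p"
  shows "mpow S k *v p = d ^ k *\<^sub>R p"
  by (induction k) (simp_all add: assms matrix_vector_mul_assoc[symmetric] mvmul_scaleR)

lemma mexp_nil:
  assumes "mpow (N::real^'n::finite^'n) s = 0"
  shows "mexp (\<sigma> *\<^sub>R N) = (\<Sum>k<s. (\<sigma> ^ k / fact k) *\<^sub>R mpow N k)"
proof -
  have "mexp (\<sigma> *\<^sub>R N) = (\<Sum>k. (1 / fact k) *\<^sub>R mpow (\<sigma> *\<^sub>R N) k)" by (simp add: mexp_def)
  also have "\<dots> = (\<Sum>k<s. (1 / fact k) *\<^sub>R mpow (\<sigma> *\<^sub>R N) k)"
    by (rule suminf_finite) (auto simp: mpow_scaleR mpow_ge[OF assms])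
  also have "\<dots> = (\<Sum>k<s. (\<sigma> ^ k / fact k) *\<^sub>R mpow N k)"
    by (simp add: mpow_scaleR)
  finally show ?thesis .
qed

lemma bounded_linear_mvmul_left: "bounded_linear (\<lambda>M::real^'n::finite^'m::finite. M *v v)"
  unfolding linear_conv_bounded_linear[symmetric]
  by (rule linearI) (simp_all add: matrix_vector_mult_add_rdistrib scaleR_mvmul)

lemma mexp_eigen:
  assumes "(S::real^'n::finite^'n) *v p = d *\<^sub>R p"
  shows "mexp (\<sigma> *\<^sub>R S) *v p = exp (\<sigma> * d) *\<^sub>R p"
proof -
  have "(\<lambda>k. (1 / fact k) *\<^sub>R mpow (\<sigma> *\<^sub>R S) k) sums mexp (\<sigma> *\<^sub>R S)"
    using mexp_sums mexp_eq by metis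
  then have "(\<lambda>k. ((1 / fact k) *\<^sub>R mpow (\<sigma> *\<^sub>R S) k) *v p) sums (mexp (\<sigma> *\<^sub>R S) *v p)"
    by (rule bounded_linear.sums[OF bounded_linear_mvmul_left])
  moreover have "(\<lambda>k. ((1 / fact k) *\<^sub>R mpow (\<sigma> *\<^sub>R S) k) *v p) = (\<lambda>k. ((\<sigma> * d) ^ k /\<^sub>R fact k) *\<^sub>R p)"
    by (rule ext) (simp add: mpow_scaleR scaleR_mvmul mpow_eigen[OF assms] power_mult_distrib divide_inverse_commute)
  moreover have "(\<lambda>k. ((\<sigma> * d) ^ k /\<^sub>R fact k) *\<^sub>R p) sums (exp (\<sigma> * d) *\<^sub>R p)"
    by (rule sums_scaleR_left[OF exp_converges])
  ultimately show ?thesis using sums_unique2 by metis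
qed

lemma invertible_inv:
  assumes "invertible (P::real^'n^'n)"
  shows "P ** matrix_inv P = mat 1" "matrix_inv P ** P = mat 1"
proof -
  have "P ** matrix_inv P = mat 1 \<and> matrix_inv P ** P = mat 1"
    using assms unfolding invertible_def matrix_inv_def by (rule someI_ex)
  then show "P ** matrix_inv P = mat 1" "matrix_inv P ** P = mat 1" by auto
qed

lemma mvmul_sum: "(M::real^'n^'m) *v (\<Sum>i\<in>I. f i) = (\<Sum>i\<in>I. M *v f i)"
  by (induct I rule: infinite_finite_induct) (simp_all add: matrix_vector_right_distrib)

lemma mvmul_as_sum: "(P::real^'n^'m) *v c = (\<Sum>i\<in>UNIV. c$i *\<^sub>R column i P)"
  by (simp add: matrix_mult_sum scalar_mult_eq_scaleR)

lemma sum_mvmul_left: "(\<Sum>i\<in>I. f i) *v (v::real^'n) = (\<Sum>i\<in>I. (f i :: real^'n^'m) *v v)"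
  by (induct I rule: infinite_finite_induct) (simp_all add: matrix_vector_mult_add_rdistrib)

locale jc =
  fixes S N P :: "real^'n::finite^'n" and s :: nat
  assumes P_inv: "invertible P"
    and diag: "\<And>i j. i \<noteq> j \<Longrightarrow> (matrix_inv P ** S ** P) $ i $ j = 0"
    and comm: "S ** N = N ** S"
    and nil: "mpow N s = 0"
begin

definition "Q = matrix_inv P"
definition "D = Q ** S ** P"
definition "d i = D $ i $ i"
definition "N' = Q ** N ** P"
definition mask :: "real \<Rightarrow> real^'n \<Rightarrow> real^'n" where
  "mask l v = (\<chi> i. if d i = l then v$i else 0)"
definition "w y l k = P *v mask l (Q *v (mpow N k *v y))"

lemma PQ: "P ** Q = mat 1" and QP: "Q ** P = mat 1"
  using invertible_inv[OF P_inv] by (simp_all add: Q_def)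

lemma D_entry: "D $ i $ j = (if i = j then d i else 0)"
  using diag[of i j] by (auto simp: D_def d_def Q_def)

lemma D_mv: "D *v v = (\<chi> i. d i * v $ i)"
proof -
  have "(D *v v) $ i = d i * v $ i" for i
  proof -
    have "(D *v v) $ i = (\<Sum>j\<in>UNIV. D $ i $ j * v $ j)"
      by (simp add: matrix_vector_mult_def)
    also have "\<dots> = (\<Sum>j\<in>UNIV. if j = i then d i * v $ j else 0)"
      by (rule sum.cong) (auto simp: D_entry)
    also have "\<dots> = d i * v $ i" by simp
    finally show ?thesis .
  qed
  then show ?thesis by (simp add: vec_eq_iff)
qed

lemma SP: "S ** P = P ** D"
proof -
  have "P ** D = (P ** Q) ** S ** P" by (simp add: D_def matrix_mul_assoc)
  then show ?thesis by (simp add: PQ)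
qed

lemma S_column: "S *v column i P = d i *\<^sub>R column i P"
proof -
  have "S *v column i P = S *v (P *v axis i 1)"
    by (simp add: matrix_vector_mult_basis)
  also have "\<dots> = (S ** P) *v axis i 1"
    by (simp add: matrix_vector_mul_assoc)
  also have "\<dots> = P *v (D *v axis i 1)" by (simp add: SP matrix_vector_mul_assoc)
  also have "D *v axis i 1 = d i *\<^sub>R axis i 1"
    by (simp add: D_mv vec_eq_iff axis_def)
  finally show ?thesis by (simp add: mvmul_scaleR matrix_vector_mult_basis)
qed

lemma mexp_S_P: "mexp (\<sigma> *\<^sub>R S) *v (P *v c) = P *v (\<chi> i. exp (\<sigma> * d i) * c$i)"
proof -
  have "mexp (\<sigma> *\<^sub>R S) *v (P *v c) = (\<Sum>i\<in>UNIV. c$i *\<^sub>R (mexp (\<sigma> *\<^sub>R S) *v column i P))"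
    by (simp add: mvmul_as_sum[of P] mvmul_sum mvmul_scaleR)
  also have "\<dots> = (\<Sum>i\<in>UNIV. (exp (\<sigma> * d i) * c$i) *\<^sub>R column i P)"
    by (simp add: mexp_eigen[OF S_column] mult.commute)
  also have "\<dots> = P *v (\<chi> i. exp (\<sigma> * d i) * c$i)"
    by (simp add: mvmul_as_sum[of P])
  finally show ?thesis .
qed

lemma DN': "D ** N' = N' ** D"
proof -
  have "D ** N' = Q ** S ** (P ** Q) ** N ** P" by (simp add: D_def N'_def matrix_mul_assoc)
  also have "\<dots> = Q ** (S ** N) ** P" by (simp add: PQ matrix_mul_assoc)
  also have "\<dots> = Q ** (N ** S) ** P" by (simp add: comm)
  also have "\<dots> = Q ** N ** (P ** Q) ** S ** P" by (simp add: PQ matrix_mul_assoc)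
  also have "\<dots> = N' ** D" by (simp add: D_def N'_def matrix_mul_assoc)
  finally show ?thesis .
qed

lemma N'_entry: "N' $ i $ j \<noteq> 0 \<Longrightarrow> d i = d j"
proof -
  have "(D ** N') $ i $ j = (\<Sum>k\<in>UNIV. D $ i $ k * N' $ k $ j)"
    by (simp add: matrix_matrix_mult_def)
  also have "\<dots> = (\<Sum>k\<in>UNIV. if k = i then d i * N' $ k $ j else 0)"
    by (rule sum.cong) (auto simp: D_entry)
  finally have 1: "(D ** N') $ i $ j = d i * N' $ i $ j" by simp
  have "(N' ** D) $ i $ j = (\<Sum>k\<in>UNIV. N' $ i $ k * D $ k $ j)"
    by (simp add: matrix_matrix_mult_def)
  also have "\<dots> = (\<Sum>k\<in>UNIV. if k = j then N' $ i $ k * d j else 0)"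
    by (rule sum.cong) (auto simp: D_entry)
  finally have 2: "(N' ** D) $ i $ j = N' $ i $ j * d j" by simp
  have "d i * N' $ i $ j = N' $ i $ j * d j" using DN' 1 2 by (metis)
  then show "N' $ i $ j \<noteq> 0 \<Longrightarrow> d i = d j" by (simp add: mult.commute)
qed

lemma N'_mask: "N' *v mask l v = mask l (N' *v v)"
proof -
  have "(N' *v mask l v) $ i = mask l (N' *v v) $ i" for i
  proof (cases "d i = l")
    case True
    have "(N' *v mask l v) $ i = (\<Sum>j\<in>UNIV. N' $ i $ j * (if d j = l then v $ j else 0))"
      by (simp add: matrix_vector_mult_def mask_def)
    also have "\<dots> = (\<Sum>j\<in>UNIV. N' $ i $ j * v $ j)"
    proof (rule sum.cong[OF refl])
      fix j
      show "N' $ i $ j * (if d j = l then v $ j else 0) = N' $ i $ j * v $ j"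
      proof (cases "d j = l")
        case False
        then have "N' $ i $ j = 0" using N'_entry[of i j] True by auto
        then show ?thesis by simp
      qed simp
    qed
    finally show ?thesis using True by (simp add: mask_def matrix_vector_mult_def)
  next
    case False
    have "(N' *v mask l v) $ i = (\<Sum>j\<in>UNIV. N' $ i $ j * (if d j = l then v $ j else 0))"
      by (simp add: matrix_vector_mult_def mask_def)
    also have "\<dots> = 0"
    proof (rule sum.neutral, rule ballI)
      fix j
      show "N' $ i $ j * (if d j = l then v $ j else 0) = 0"
      proof (cases "d j = l")
        case True
        then have "N' $ i $ j = 0" using N'_entry[of i j] False by auto
        then show ?thesis by simp
      qed simp
    qed
    finally show ?thesis using False by (simp add: mask_def)
  qed
  then show ?thesis by (simp add: vec_eq_iff)
qed

lemma NP: "N ** P = P ** N'"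
proof -
  have "P ** N' = (P ** Q) ** N ** P" by (simp add: N'_def matrix_mul_assoc)
  then show ?thesis by (simp add: PQ)
qed

lemma N_w: "N *v w y l k = w y l (Suc k)"
proof -
  have "N *v w y l k = P *v (N' *v mask l (Q *v (mpow N k *v y)))"
    by (simp add: w_def matrix_vector_mul_assoc NP)
  also have "\<dots> = P *v mask l (N' *v (Q *v (mpow N k *v y)))" by (simp add: N'_mask)
  also have "N' *v (Q *v (mpow N k *v y)) = Q *v (N *v ((P ** Q) *v (mpow N k *v y)))"
    by (simp add: N'_def matrix_vector_mul_assoc matrix_mul_assoc)
  also have "\<dots> = Q *v (mpow N (Suc k) *v y)"
    by (simp add: PQ matrix_vector_mul_assoc)
  finally show ?thesis by (simp add: w_def)
qed

lemma mask_zero: "mask l 0 = 0" by (simp add: mask_def vec_eq_iff)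

lemma w_ge: "s \<le> k \<Longrightarrow> w y l k = 0"
  by (simp add: w_def mpow_ge[OF nil] mask_zero)

lemma sum_mask: "(\<Sum>l\<in>range d. mask l v) = v"
proof -
  have "(\<Sum>l\<in>range d. mask l v) $ i = v $ i" for i
  proof -
    have "(\<Sum>l\<in>range d. mask l v) $ i = (\<Sum>l\<in>range d. if d i = l then v $ i else 0)"
      by (simp add: mask_def sum_component)
    also have "\<dots> = v $ i" by (subst sum.delta') auto
    finally show ?thesis .
  qed
  then show ?thesis by (simp add: vec_eq_iff)
qed

lemma expD_mask: "(\<chi> i. exp (\<sigma> * d i) * c$i) = (\<Sum>l\<in>range d. exp (\<sigma> * l) *\<^sub>R mask l c)"
proof -
  have "(\<Sum>l\<in>range d. exp (\<sigma> * l) *\<^sub>R mask l c) $ i = exp (\<sigma> * d i) * c$i" for i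
  proof -
    have "(\<Sum>l\<in>range d. exp (\<sigma> * l) *\<^sub>R mask l c) $ i
        = (\<Sum>l\<in>range d. if d i = l then exp (\<sigma> * l) * c $ i else 0)"
      by (simp add: mask_def sum_component if_distrib cong: if_cong)
    also have "\<dots> = exp (\<sigma> * d i) * c$i" by (subst sum.delta') auto
    finally show ?thesis .
  qed
  then show ?thesis by (simp add: vec_eq_iff)
qed

lemma formula:
  "mexp (\<sigma> *\<^sub>R (S + N)) *v y = (\<Sum>k<s. \<Sum>l\<in>range d. (\<sigma> ^ k / fact k * exp (\<sigma> * l)) *\<^sub>R w y l k)"
proof -
  have c: "(\<sigma> *\<^sub>R S) ** (\<sigma> *\<^sub>R N) = (\<sigma> *\<^sub>R N) ** (\<sigma> *\<^sub>R S)"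
    by (simp add: scaleR_mmul mmul_scaleR comm)
  have 1: "mexp (\<sigma> *\<^sub>R (S + N)) *v y = mexp (\<sigma> *\<^sub>R S) *v (mexp (\<sigma> *\<^sub>R N) *v y)"
    by (simp add: scaleR_add_right mexp_add_commuting[OF c] matrix_vector_mul_assoc)
  have 2: "mexp (\<sigma> *\<^sub>R N) *v y = (\<Sum>k<s. (\<sigma> ^ k / fact k) *\<^sub>R (P *v (Q *v (mpow N k *v y))))"
  proof -
    have "mexp (\<sigma> *\<^sub>R N) *v y = (\<Sum>k<s. (\<sigma> ^ k / fact k) *\<^sub>R (mpow N k *v y))"
      by (simp add: mexp_nil[OF nil] sum_mvmul_left scaleR_mvmul)
    moreover have "P *v (Q *v z) = z" for z by (simp add: matrix_vector_mul_assoc PQ)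
    ultimately show ?thesis by simp
  qed
  have 3: "mexp (\<sigma> *\<^sub>R S) *v (P *v q) = (\<Sum>l\<in>range d. exp (\<sigma> * l) *\<^sub>R (P *v mask l q))" for q
    by (simp add: mexp_S_P expD_mask mvmul_sum mvmul_scaleR)
  have "mexp (\<sigma> *\<^sub>R (S + N)) *v y
      = (\<Sum>k<s. (\<sigma> ^ k / fact k) *\<^sub>R (\<Sum>l\<in>range d. exp (\<sigma> * l) *\<^sub>R w y l k))"
    unfolding 1 2 by (simp add: mvmul_sum mvmul_scaleR 3 w_def)
  also have "\<dots> = (\<Sum>k<s. \<Sum>l\<in>range d. (\<sigma> ^ k / fact k * exp (\<sigma> * l)) *\<^sub>R w y l k)"
    by (simp add: scaleR_sum_right)
  finally show ?thesis .
qed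

end


lemma coef_lt:
  assumes "l < L"
  shows "((\<lambda>\<sigma>::real. 1 / (\<sigma> ^ m * exp (\<sigma> * L)) * (\<sigma> ^ k / fact k * exp (\<sigma> * l))) \<longlongrightarrow> 0) at_top"
proof -
  define a where "a = L - l"
  have a: "a > 0" using assms by (simp add: a_def)
  have "LIM \<sigma> at_top. a * \<sigma> :> at_top"
    by (rule filterlim_tendsto_pos_mult_at_top[OF tendsto_const a filterlim_ident])
  then have "((\<lambda>\<sigma>. (a * \<sigma>) ^ k / exp (a * \<sigma>)) \<longlongrightarrow> 0) at_top"
    using tendsto_power_div_exp_0[of k] by (rule filterlim_compose[rotated])
  then have lim: "((\<lambda>\<sigma>. (a * \<sigma>) ^ k / exp (a * \<sigma>) / a ^ k) \<longlongrightarrow> 0) at_top"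
    by (rule tendsto_divide_zero)
  show ?thesis
  proof (rule Lim_null_comparison[OF _ lim])
    show "\<forall>\<^sub>F \<sigma> in at_top. norm (1 / (\<sigma> ^ m * exp (\<sigma> * L)) * (\<sigma> ^ k / fact k * exp (\<sigma> * l)))
         \<le> (a * \<sigma>) ^ k / exp (a * \<sigma>) / a ^ k"
      using eventually_ge_at_top[of "1::real"]
    proof eventually_elim
      case (elim \<sigma>)
      have e: "exp (\<sigma> * L) = exp (\<sigma> * l) * exp (a * \<sigma>)"
      proof -
        have "\<sigma> * L = \<sigma> * l + a * \<sigma>" by (simp add: a_def algebra_simps)
        then have "exp (\<sigma> * L) = exp (\<sigma> * l + a * \<sigma>)" by (rule arg_cong)
        then show ?thesis by (simp only: exp_add)
      qed
      have "norm (1 / (\<sigma> ^ m * exp (\<sigma> * L)) * (\<sigma> ^ k / fact k * exp (\<sigma> * l)))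
          = \<sigma> ^ k / (\<sigma> ^ m * fact k * exp (a * \<sigma>))"
        using elim unfolding e by (simp add: field_simps)
      also have "\<dots> \<le> \<sigma> ^ k / exp (a * \<sigma>)"
      proof (rule divide_left_mono)
        have "1 \<le> \<sigma> ^ m * fact k" using elim
          by (metis fact_ge_1 mult_mono' mult_1_left one_le_power order.trans zero_le_one)
        then show "exp (a * \<sigma>) \<le> \<sigma> ^ m * fact k * exp (a * \<sigma>)" by simp
      qed (use elim in auto)
      also have "\<dots> = (a * \<sigma>) ^ k / exp (a * \<sigma>) / a ^ k"
        using a by (simp add: power_mult_distrib field_simps)
      finally show ?case .
    qed
  qed
qed

lemma coef_eq_lt:
  assumes "k < m"
  shows "((\<lambda>\<sigma>::real. 1 / (\<sigma> ^ m * exp (\<sigma> * L)) * (\<sigma> ^ k / fact k * exp (\<sigma> * L))) \<longlongrightarrow> 0) at_top"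
proof -
  have "LIM \<sigma> at_top. (\<sigma>::real) ^ (m - k) :> at_top"
    using assms by (intro filterlim_pow_at_top filterlim_ident) auto
  then have "((\<lambda>\<sigma>::real. inverse (\<sigma> ^ (m - k))) \<longlongrightarrow> 0) at_top"
    by (rule tendsto_inverse_0_at_top)
  then have lim: "((\<lambda>\<sigma>::real. inverse (\<sigma> ^ (m - k)) / fact k) \<longlongrightarrow> 0) at_top"
    by (rule tendsto_divide_zero)
  show ?thesis
  proof (rule Lim_transform_eventually[OF lim])
    show "\<forall>\<^sub>F \<sigma> in at_top. inverse (\<sigma> ^ (m - k)) / fact k
        = 1 / (\<sigma> ^ m * exp (\<sigma> * L)) * (\<sigma> ^ k / fact k * exp (\<sigma> * L))"
      using eventually_gt_at_top[of "0::real"]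
    proof eventually_elim
      case (elim \<sigma>)
      have "\<sigma> ^ m = \<sigma> ^ (m - k) * \<sigma> ^ k" using assms by (simp add: power_add[symmetric])
      then show ?case using elim by (simp add: field_simps)
    qed
  qed
qed

lemma coef_eq:
  "((\<lambda>\<sigma>::real. 1 / (\<sigma> ^ m * exp (\<sigma> * L)) * (\<sigma> ^ m / fact m * exp (\<sigma> * L))) \<longlongrightarrow> 1 / fact m) at_top"
proof (rule Lim_transform_eventually[OF tendsto_const])
  show "\<forall>\<^sub>F \<sigma> in at_top. 1 / fact m = 1 / (\<sigma> ^ m * exp (\<sigma> * L)) * (\<sigma> ^ m / fact m * exp (\<sigma> * L))"
    using eventually_gt_at_top[of "0::real"] by eventually_elim (simp add: field_simps)
qed

lemma normalize_scale:
  fixes v :: "'a::real_normed_vector"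
  assumes "c > 0"
  shows "(1 / norm (c *\<^sub>R v)) *\<^sub>R (c *\<^sub>R v) = (1 / norm v) *\<^sub>R v"
  using assms by (cases "v = 0") (auto simp: field_simps)

context jc begin

lemma s_pos: "0 < s"
proof (rule ccontr)
  assume "\<not> 0 < s"
  then have "(mat 1 :: real^'n^'n) = 0" using nil by simp
  moreover obtain i :: 'n where True by simp
  moreover have "(mat 1 :: real^'n^'n) $ i $ i = 1" by (simp add: mat_def)
  ultimately show False by simp
qed

lemma sum_w0: "(\<Sum>l\<in>range d. w y l 0) = y"
proof -
  have "(\<Sum>l\<in>range d. w y l 0) = P *v (\<Sum>l\<in>range d. mask l (Q *v y))"
    by (simp add: w_def mvmul_sum)
  also have "\<dots> = y" by (simp add: sum_mask matrix_vector_mul_assoc PQ)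
  finally show ?thesis .
qed

lemma dir_limit:
  assumes "y \<noteq> 0"
  shows "\<exists>U. ((\<lambda>\<sigma>. (1 / norm (mexp (\<sigma> *\<^sub>R (S + N)) *v y)) *\<^sub>R (mexp (\<sigma> *\<^sub>R (S + N)) *v y)) \<longlongrightarrow> U) at_top
             \<and> norm U = 1 \<and> N *v U = 0"
proof -
  define Z where "Z = {(l, k). l \<in> range d \<and> k < s \<and> w y l k \<noteq> 0}"
  have finZ: "finite Z"
    by (rule finite_subset[of _ "range d \<times> {..<s}"]) (auto simp: Z_def)
  obtain l0 where l0: "l0 \<in> range d" "w y l0 0 \<noteq> 0"
  proof (rule ccontr)
    assume "\<not> thesis"
    then have "\<forall>l\<in>range d. w y l 0 = 0" using that by blast
    then have "(\<Sum>l\<in>range d. w y l 0) = 0" by (intro sum.neutral) blast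
    then show False using sum_w0[of y] assms by simp
  qed
  then have Zne: "(l0, 0) \<in> Z" using s_pos by (simp add: Z_def)
  define L where "L = Max (fst ` Z)"
  have "L \<in> fst ` Z" unfolding L_def using finZ Zne by (intro Max_in) auto
  then obtain k1 where k1: "(L, k1) \<in> Z" by force
  have finK: "finite {k. (L, k) \<in> Z}"
    by (rule finite_subset[of _ "{..<s}"]) (auto simp: Z_def)
  define K where "K = Max {k. (L, k) \<in> Z}"
  have LK: "(L, K) \<in> Z" unfolding K_def using finK k1 Max_in[of "{k. (L, k) \<in> Z}"] by auto
  have maxL: "l \<le> L" if "(l, k) \<in> Z" for l k
    unfolding L_def using finZ that by (intro Max_ge) force+
  have maxK: "k \<le> K" if "(L, k) \<in> Z" for k
    unfolding K_def using finK that by (intro Max_ge) auto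
  define W where "W = w y L K"
  have W: "W \<noteq> 0" "L \<in> range d" "K < s" using LK by (auto simp: Z_def W_def)
  have NW: "N *v W = 0"
  proof (cases "Suc K < s")
    case True
    then have "(L, Suc K) \<notin> Z" using maxK by fastforce
    then show ?thesis using True W by (simp add: W_def N_w Z_def)
  next
    case False
    then show ?thesis by (simp add: W_def N_w w_ge)
  qed
  define f where "f \<sigma> = mexp (\<sigma> *\<^sub>R (S + N)) *v y" for \<sigma>
  define c where "c \<sigma> k l = 1 / (\<sigma> ^ K * exp (\<sigma> * L)) * (\<sigma> ^ k / fact k * exp (\<sigma> * l))" for \<sigma> :: real and k l
  define g where "g \<sigma> = (1 / (\<sigma> ^ K * exp (\<sigma> * L))) *\<^sub>R f \<sigma>" for \<sigma>
  have g_eq: "g \<sigma> = (\<Sum>k<s. \<Sum>l\<in>range d. c \<sigma> k l *\<^sub>R w y l k)" for \<sigma>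
    by (simp add: g_def f_def c_def formula scaleR_sum_right)
  define G where "G = (1 / fact K) *\<^sub>R W"
  have terms: "((\<lambda>\<sigma>. c \<sigma> k l *\<^sub>R w y l k) \<longlongrightarrow> (if k = K \<and> l = L then G else 0)) at_top"
    if kl: "k < s" "l \<in> range d" for k l
  proof (cases "k = K \<and> l = L")
    case True
    then have "k = K" "l = L" by auto
    have "((\<lambda>\<sigma>. c \<sigma> K L *\<^sub>R w y L K) \<longlongrightarrow> (1 / fact K) *\<^sub>R w y L K) at_top"
      unfolding c_def by (intro tendsto_scaleR coef_eq tendsto_const)
    then show ?thesis using True by (simp add: G_def W_def)
  next
    case False
    show ?thesis
    proof (cases "w y l k = 0")
      case True
      have "(if k = K \<and> l = L then G else 0) = 0" using False by auto
      then show ?thesis using True by simp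
    next
      case wne: False
      then have "(l, k) \<in> Z" using kl by (simp add: Z_def)
      then have lL: "l \<le> L" using maxL by blast
      have "(c \<sigma> k l) = c \<sigma> k l" for \<sigma> ..
      have "((\<lambda>\<sigma>. c \<sigma> k l) \<longlongrightarrow> 0) at_top"
      proof (cases "l < L")
        case True
        then show ?thesis unfolding c_def by (rule coef_lt)
      next
        case nlt: False
        then have "l = L" using lL by simp
        then have "k \<le> K" using maxK \<open>(l, k) \<in> Z\<close> by blast
        then have "k < K" using False \<open>l = L\<close> by simp
        then show ?thesis unfolding c_def \<open>l = L\<close> by (rule coef_eq_lt)
      qed
      then have "((\<lambda>\<sigma>. c \<sigma> k l *\<^sub>R w y l k) \<longlongrightarrow> 0 *\<^sub>R w y l k) at_top"
        by (intro tendsto_scaleR tendsto_const)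
      moreover have "(if k = K \<and> l = L then G else 0) = 0" using False by auto
      ultimately show ?thesis by simp
    qed
  qed
  have "(g \<longlongrightarrow> (\<Sum>k<s. \<Sum>l\<in>range d. if k = K \<and> l = L then G else 0)) at_top"
    unfolding g_eq by (intro tendsto_sum terms) auto
  moreover have "(\<Sum>k<s. \<Sum>l\<in>range d. if k = K \<and> l = L then G else 0) = G"
  proof -
    have "(\<Sum>l\<in>range d. if k = K \<and> l = L then G else 0) = (if k = K then G else 0)" for k
      using W(2) by (cases "k = K") (simp_all add: sum.delta)
    then show ?thesis using W(3) by (simp add: sum.delta)
  qed
  ultimately have glim: "(g \<longlongrightarrow> G) at_top" by simp
  have Gne: "G \<noteq> 0" using W(1) by (simp add: G_def)
  have ulim: "((\<lambda>\<sigma>. (1 / norm (g \<sigma>)) *\<^sub>R g \<sigma>) \<longlongrightarrow> (1 / norm G) *\<^sub>R G) at_top"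
    using Gne by (intro tendsto_intros glim) auto
  have ev: "\<forall>\<^sub>F \<sigma> in at_top. (1 / norm (g \<sigma>)) *\<^sub>R g \<sigma> = (1 / norm (f \<sigma>)) *\<^sub>R f \<sigma>"
    using eventually_gt_at_top[of "0::real"]
  proof eventually_elim
    case (elim \<sigma>)
    then have "1 / (\<sigma> ^ K * exp (\<sigma> * L)) > 0" by simp
    then show ?case unfolding g_def by (rule normalize_scale)
  qed
  have "((\<lambda>\<sigma>. (1 / norm (f \<sigma>)) *\<^sub>R f \<sigma>) \<longlongrightarrow> (1 / norm G) *\<^sub>R G) at_top"
    by (rule Lim_transform_eventually[OF ulim ev])
  moreover have "norm ((1 / norm G) *\<^sub>R G) = 1" using Gne by simp
  moreover have "N *v ((1 / norm G) *\<^sub>R G) = 0" by (simp add: G_def mvmul_scaleR NW)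
  ultimately show ?thesis unfolding f_def by blast
qed

end


lemma mat_vec_bound: "norm ((M::real^'n::finite^'m::finite) *v v) \<le> (real CARD('m) * real CARD('n) * norm M) * norm v"
proof -
  have "norm (M *v v) \<le> onorm ((*v) M) * norm v"
    by (rule onorm[OF matrix_vector_mul_bounded_linear])
  also have "\<dots> \<le> (real CARD('m) * real CARD('n) * norm M) * norm v"
    by (intro mult_right_mono onorm_le_mat_norm) auto
  finally show ?thesis .
qed

lemma normalize_diff:
  fixes v w :: "'a::real_normed_vector"
  assumes "w \<noteq> 0"
  shows "norm ((1 / norm v) *\<^sub>R v - (1 / norm w) *\<^sub>R w) \<le> 2 * norm (v - w) / norm w"
proof (cases "v = 0")
  case True
  then show ?thesis using assms by simp
next
  case False
  have eq: "(1 / norm v) *\<^sub>R v - (1 / norm w) *\<^sub>R w = (1 / norm w) *\<^sub>R (v - w) + (1 / norm v - 1 / norm w) *\<^sub>R v"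
    by (simp add: algebra_simps)
  have "norm ((1 / norm v - 1 / norm w) *\<^sub>R v) = \<bar>norm w - norm v\<bar> / norm w"
    using False assms by (simp add: field_simps abs_mult)
  also have "\<dots> \<le> norm (v - w) / norm w"
    using assms by (intro divide_right_mono) (auto simp: norm_triangle_ineq3 abs_minus_commute)
  finally have 2: "norm ((1 / norm v - 1 / norm w) *\<^sub>R v) \<le> norm (v - w) / norm w" .
  have "norm ((1 / norm v) *\<^sub>R v - (1 / norm w) *\<^sub>R w) \<le> norm ((1 / norm w) *\<^sub>R (v - w)) + norm ((1 / norm v - 1 / norm w) *\<^sub>R v)"
    unfolding eq by (rule norm_triangle_ineq)
  also have "\<dots> \<le> norm (v - w) / norm w + norm (v - w) / norm w"
    using 2 by simp
  finally show ?thesis by simp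
qed

context jc begin

definition "E b = mexp (b *\<^sub>R (S + N))"
definition "uu y b = (1 / norm (E b *v y)) *\<^sub>R (E b *v y)"

lemma E_add: "E (a + b) = E a ** E b"
  unfolding E_def by (rule mexp_scaleR_add)

lemma E_zero: "E 0 = mat 1"
  by (simp add: E_def mexp_zero)

lemma E_inv: "E (- b) *v (E b *v x) = x"
proof -
  have "E (- b) ** E b = mat 1" using E_add[of "-b" b] by (simp add: E_zero)
  then show ?thesis by (simp add: matrix_vector_mul_assoc)
qed

lemma E_cont: "continuous_on U E"
  unfolding E_def by (rule continuous_mexp)

lemma E_bound: "\<exists>K>0. \<forall>b\<in>{lo..hi}. \<forall>v. norm (E b *v v) \<le> K * norm v"
proof -
  have "compact (E ` {lo..hi})" by (intro compact_continuous_image E_cont compact_Icc)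
  then obtain B where B: "B > 0" "\<forall>M\<in>E ` {lo..hi}. norm M \<le> B"
    using compact_imp_bounded bounded_pos by metis
  show ?thesis
  proof (intro exI[of _ "real CARD('n) * real CARD('n) * B"] conjI ballI allI)
    show "0 < real CARD('n) * real CARD('n) * B" using B by simp
    fix b and v :: "real^'n" assume "b \<in> {lo..hi}"
    then have "norm (E b) \<le> B" using B by auto
    then have "real CARD('n) * real CARD('n) * norm (E b) * norm v \<le> real CARD('n) * real CARD('n) * B * norm v"
      by (intro mult_right_mono mult_left_mono) auto
    then show "norm (E b *v v) \<le> real CARD('n) * real CARD('n) * B * norm v"
      using mat_vec_bound[of "E b" v] by linarith
  qed
qed

lemma E_lower: "\<exists>K>0. \<forall>b\<in>{lo..hi}. \<forall>v. norm v \<le> K * norm (E b *v v)"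
proof -
  obtain K where K: "K > 0" "\<forall>b\<in>{-hi..-lo}. \<forall>v. norm (E b *v v) \<le> K * norm v"
    using E_bound by blast
  show ?thesis
  proof (intro exI[of _ K] conjI ballI allI)
    fix b and v :: "real^'n" assume "b \<in> {lo..hi}"
    then have "-b \<in> {-hi..-lo}" by auto
    then have "norm (E (-b) *v (E b *v v)) \<le> K * norm (E b *v v)" using K by blast
    then show "norm v \<le> K * norm (E b *v v)" by (simp add: E_inv)
  qed (use K in auto)
qed

lemma E_nonzero: "v \<noteq> 0 \<Longrightarrow> E b *v v \<noteq> 0"
  by (metis E_inv matrix_vector_mult_0_right)

lemma norm_uu: "v \<noteq> 0 \<Longrightarrow> norm (uu v b) = 1"
  using E_nonzero[of v b] by (simp add: uu_def)

lemma uniform_window: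
  assumes eta: "\<eta> > 0" and del: "\<delta> \<ge> 0"
  shows "\<exists>Lw\<ge>0. \<forall>y. norm y = 1 \<longrightarrow> (\<exists>a\<in>{0..Lw}.
            (\<forall>\<sigma>\<in>{0..\<delta>}. norm (uu y (a + \<sigma>) - uu y a) \<le> \<eta>) \<and> norm (N *v uu y a) \<le> \<eta>)"
proof (rule ccontr)
  define good where "good y a \<longleftrightarrow> (\<forall>\<sigma>\<in>{0..\<delta>}. norm (uu y (a + \<sigma>) - uu y a) \<le> \<eta>) \<and> norm (N *v uu y a) \<le> \<eta>"
    for y a
  assume "\<not> ?thesis"
  then have "\<forall>Lw\<ge>0. \<exists>y. norm y = 1 \<and> (\<forall>a\<in>{0..Lw}. \<not> good y a)"
    unfolding good_def by blast
  then have "\<forall>m::nat. \<exists>y. norm y = 1 \<and> (\<forall>a\<in>{0..real m}. \<not> good y a)"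
    by simp
  then obtain ys where ys: "\<And>m. norm (ys m) = 1" "\<And>m a. a \<in> {0..real m} \<Longrightarrow> \<not> good (ys m) a"
    by metis
  have "seq_compact (sphere (0::real^'n) 1)" by (intro compact_imp_seq_compact compact_sphere)
  moreover have "\<forall>m. ys m \<in> sphere 0 1" using ys(1) by simp
  ultimately obtain y0 r where y0: "y0 \<in> sphere 0 1" "strict_mono r" "(ys \<circ> r) \<longlonglongrightarrow> y0"
    by (rule seq_compactE)
  have ny0: "norm y0 = 1" using y0(1) by simp
  then have y0ne: "y0 \<noteq> 0" by auto
  obtain U where U: "((\<lambda>b. uu y0 b) \<longlongrightarrow> U) at_top" "norm U = 1" "N *v U = 0"
    using dir_limit[OF y0ne] unfolding uu_def E_def by blast
  define KN where "KN = onorm ((*v) N)"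
  have KN: "KN \<ge> 0" unfolding KN_def by (rule onorm_pos_le[OF matrix_vector_mul_bounded_linear])
  define \<eta>1 where "\<eta>1 = \<eta> / (4 * (1 + KN))"
  have eta1: "\<eta>1 > 0" using eta KN by (simp add: \<eta>1_def)
  have "\<forall>\<^sub>F b in at_top. dist (uu y0 b) U < \<eta>1" using tendstoD[OF U(1) eta1] .
  then obtain a1 where a1: "\<And>b. b \<ge> a1 \<Longrightarrow> dist (uu y0 b) U < \<eta>1"
    by (auto simp: eventually_at_top_linorder)
  define a0 where "a0 = max a1 0"
  have a0: "a0 \<ge> 0" "\<And>b. b \<ge> a0 \<Longrightarrow> norm (uu y0 b - U) < \<eta>1"
    using a1 by (auto simp: a0_def dist_norm)
  obtain K1 where K1: "K1 > 0" "\<forall>b\<in>{a0..a0+\<delta>}. \<forall>v. norm (E b *v v) \<le> K1 * norm v"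
    using E_bound by blast
  obtain K2 where K2: "K2 > 0" "\<forall>b\<in>{a0..a0+\<delta>}. \<forall>v. norm v \<le> K2 * norm (E b *v v)"
    using E_lower by blast
  define \<rho> where "\<rho> = \<eta>1 / (2 * K1 * K2)"
  have rho: "\<rho> > 0" using eta1 K1 K2 by (simp add: \<rho>_def)
  have close: "norm (uu y b - uu y0 b) \<le> \<eta>1" if yc: "norm (y - y0) < \<rho>" and b: "b \<in> {a0..a0+\<delta>}" for y b
  proof -
    have w0: "E b *v y0 \<noteq> 0" using E_nonzero[OF y0ne] .
    have "norm (uu y b - uu y0 b) \<le> 2 * norm (E b *v y - E b *v y0) / norm (E b *v y0)"
      unfolding uu_def by (rule normalize_diff[OF w0])
    also have "E b *v y - E b *v y0 = E b *v (y - y0)" by (simp add: matrix_vector_mult_diff_distrib)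
    also have "2 * norm (E b *v (y - y0)) / norm (E b *v y0) \<le> 2 * (K1 * \<rho>) * K2"
    proof -
      have n1: "norm (E b *v (y - y0)) \<le> K1 * \<rho>"
        using K1(2) b yc K1(1) by (meson less_imp_le mult_left_mono order_trans)
      have "1 \<le> K2 * norm (E b *v y0)" using K2(2) b ny0 by metis
      then have n2: "1 / norm (E b *v y0) \<le> K2" using w0 by (simp add: field_simps)
      have "2 * norm (E b *v (y - y0)) / norm (E b *v y0) = 2 * norm (E b *v (y - y0)) * (1 / norm (E b *v y0))"
        by simp
      also have "\<dots> \<le> 2 * (K1 * \<rho>) * K2"
        using n1 n2 K1(1) rho by (intro mult_mono) auto
      finally show ?thesis .
    qed
    also have "2 * (K1 * \<rho>) * K2 = \<eta>1" using K1 K2 by (simp add: \<rho>_def field_simps)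
    finally show ?thesis .
  qed
  have good_near: "good y a0" if yc: "norm (y - y0) < \<rho>" for y
  proof -
    have nb: "norm (uu y b - U) \<le> 2 * \<eta>1" if "b \<in> {a0..a0+\<delta>}" for b
    proof -
      have "norm (uu y b - U) \<le> norm (uu y b - uu y0 b) + norm (uu y0 b - U)"
        by (rule norm_diff_triangle_le[of _ "uu y0 b"]) auto
      also have "\<dots> \<le> \<eta>1 + \<eta>1"
        using close[OF yc that] a0(2)[of b] that by (intro add_mono) auto
      finally show ?thesis by simp
    qed
    have e4: "4 * \<eta>1 \<le> \<eta>" using eta KN by (simp add: \<eta>1_def field_simps)
    have e2: "KN * (2 * \<eta>1) \<le> \<eta>" using eta KN by (simp add: \<eta>1_def field_simps)
    show ?thesis unfolding good_def
    proof (intro conjI ballI)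
      fix \<sigma> assume \<sigma>: "\<sigma> \<in> {0..\<delta>}"
      have "norm (uu y (a0 + \<sigma>) - uu y a0) \<le> norm (uu y (a0 + \<sigma>) - U) + norm (uu y a0 - U)"
        by (rule norm_diff_triangle_le[of _ U]) (auto simp: norm_minus_commute)
      also have "\<dots> \<le> 2 * \<eta>1 + 2 * \<eta>1"
        using \<sigma> del by (intro add_mono nb) auto
      finally show "norm (uu y (a0 + \<sigma>) - uu y a0) \<le> \<eta>" using e4 by simp
    next
      have "N *v uu y a0 = N *v (uu y a0 - U)" using U(3) by (simp add: matrix_vector_mult_diff_distrib)
      then have "norm (N *v uu y a0) \<le> KN * norm (uu y a0 - U)"
        unfolding KN_def using onorm[OF matrix_vector_mul_bounded_linear] by metis
      also have "\<dots> \<le> KN * (2 * \<eta>1)"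
        using del by (intro mult_left_mono nb KN) auto
      finally show "norm (N *v uu y a0) \<le> \<eta>" using e2 by simp
    qed
  qed
  have "\<forall>\<^sub>F m in sequentially. dist ((ys \<circ> r) m) y0 < \<rho>" using tendstoD[OF y0(3) rho] .
  moreover have "\<forall>\<^sub>F m in sequentially. a0 \<le> real m"
    by (rule eventually_sequentiallyI[of "nat \<lceil>a0\<rceil>"]) linarith
  ultimately have "\<forall>\<^sub>F m in sequentially. dist ((ys \<circ> r) m) y0 < \<rho> \<and> a0 \<le> real m"
    by (rule eventually_conj)
  then obtain m where m: "dist (ys (r m)) y0 < \<rho>" "a0 \<le> real m"
    using eventually_sequentially by auto
  have "m \<le> r m" using seq_suble[OF y0(2)] .
  then have "a0 \<in> {0..real (r m)}" using m(2) a0(1) by auto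
  moreover have "good (ys (r m)) a0" using good_near m(1) by (simp add: dist_norm)
  ultimately show False using ys(2) by blast
qed

end


lemma bb_mv: "bounded_bilinear (\<lambda>(M::real^'n::finite^'m::finite) (v::real^'n). M *v v)"
  unfolding bilinear_conv_bounded_bilinear[symmetric] bilinear_def
  by (auto intro!: linearI simp: matrix_vector_right_distrib matrix_vector_mult_add_rdistrib
      scaleR_mvmul mvmul_scaleR)

lemma mmul_add_rdistrib: "((X::real^'n::finite^'m) + Y) ** (Z::real^'k^'n) = X ** Z + Y ** Z"
  by (simp add: matrix_matrix_mult_def vec_eq_iff sum.distrib algebra_simps)

lemma bb_mm: "bounded_bilinear (\<lambda>(X::real^'n::finite^'m::finite) (Y::real^'k::finite^'n). X ** Y)"
  unfolding bilinear_conv_bounded_bilinear[symmetric] bilinear_def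
  by (auto intro!: linearI simp: matrix_add_ldistrib mmul_add_rdistrib scaleR_mmul mmul_scaleR)

lemma bl_transpose: "bounded_linear (transpose :: real^'n::finite^'m::finite \<Rightarrow> real^'m^'n)"
  unfolding linear_conv_bounded_linear[symmetric]
  by (rule linearI) (simp_all add: transpose_def vec_eq_iff)

lemma quad_bl: "bounded_linear (\<lambda>M::real^'n::finite^'n. x \<bullet> (M *v x))"
  unfolding linear_conv_bounded_linear[symmetric]
  by (rule linearI) (simp_all add: matrix_vector_mult_add_rdistrib scaleR_mvmul inner_add_right)

lemma quad_integral:
  fixes x :: "real^'n::finite"
  assumes "F integrable_on U"
  shows "x \<bullet> (integral U F *v x) = integral U (\<lambda>\<tau>. x \<bullet> (F \<tau> *v x))"
  using integral_linear[OF assms quad_bl[of x]] by (simp add: o_def)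

lemma quad_gram:
  fixes M :: "real^'n::finite^'m::finite"
  shows "x \<bullet> ((transpose M ** M) *v x) = norm (M *v x) ^ 2"
proof -
  have "x \<bullet> ((transpose M ** M) *v x) = x \<bullet> (transpose M *v (M *v x))"
    by (simp add: matrix_vector_mul_assoc)
  also have "\<dots> = (x v* transpose M) \<bullet> (M *v x)" by (rule dot_lmul_matrix[symmetric])
  also have "x v* transpose M = M *v x" by (rule vector_transpose_matrix)
  also have "(M *v x) \<bullet> (M *v x) = norm (M *v x) ^ 2" by (rule dot_square_norm)
  finally show ?thesis .
qed

lemma quad_uo: "x \<bullet> ((transpose F ** transpose (M::real^'n::finite^'m::finite) ** M ** F) *v x) = norm (M *v (F *v x)) ^ 2"
proof -
  have "transpose F ** transpose M ** M ** F = transpose (M ** F) ** (M ** F)"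
    by (simp add: matrix_transpose_mul matrix_mul_assoc)
  then show ?thesis by (simp add: quad_gram matrix_vector_mul_assoc)
qed

lemma mpow_Suc_right: "mpow M (Suc k) = mpow M k ** M"
  using mpow_add[of M k 1] by simp


lemma O_bound:
  fixes sel :: "'r::finite \<Rightarrow> 'm::finite \<times> nat" and M :: "real^'n::finite^'m" and N :: "real^'n^'n"
  assumes "\<And>j. norm (M *v (mpow N (snd (sel j)) *v u)) ^ 2 \<le> X"
  shows "norm ((\<chi> j. row (fst (sel j)) (M ** mpow N (snd (sel j)))) *v u) ^ 2 \<le> real CARD('r) * X"
proof -
  let ?O = "(\<chi> j. row (fst (sel j)) (M ** mpow N (snd (sel j))))"
  have comp: "(?O *v u) $ j = (M *v (mpow N (snd (sel j)) *v u)) $ fst (sel j)" for j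
  proof -
    have "(?O *v u) $ j = ((M ** mpow N (snd (sel j))) *v u) $ fst (sel j)"
      by (simp add: matrix_vector_mult_def row_def)
    then show ?thesis by (simp add: matrix_vector_mul_assoc)
  qed
  have "norm (?O *v u) ^ 2 = (\<Sum>j\<in>UNIV. ((?O *v u) $ j) ^ 2)"
    unfolding power2_norm_eq_inner inner_vec_def by (simp add: power2_eq_square)
  also have "\<dots> \<le> (\<Sum>j\<in>(UNIV::'r set). X)"
  proof (rule sum_mono)
    fix j
    have "\<bar>(?O *v u) $ j\<bar> \<le> norm (M *v (mpow N (snd (sel j)) *v u))"
      unfolding comp by (rule component_le_norm_cart)
    then have "\<bar>(?O *v u) $ j\<bar> ^ 2 \<le> norm (M *v (mpow N (snd (sel j)) *v u)) ^ 2"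
      by (rule power_mono) simp
    then have "((?O *v u) $ j) ^ 2 \<le> norm (M *v (mpow N (snd (sel j)) *v u)) ^ 2"
      by (simp only: power2_abs)
    then show "((?O *v u) $ j) ^ 2 \<le> X" using assms[of j] by linarith
  qed
  also have "\<dots> = real CARD('r) * X" by simp
  finally show ?thesis .
qed

lemma sq_sum_le: "(p + q) ^ 2 \<le> 2 * p ^ 2 + 2 * (q::real) ^ 2"
proof -
  have "0 \<le> (p - q) ^ 2" by simp
  then have "0 \<le> p ^ 2 + q ^ 2 - 2 * p * q" by (simp add: power2_diff)
  then show ?thesis by (simp add: power2_sum)
qed

theorem lemma1:
  fixes A S N :: "real^'n^'n"
    and C :: "real \<Rightarrow> real^'n^'m"
    and s :: nat
    and sel :: "'r::finite \<Rightarrow> 'm \<times> nat"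
    and \<O> :: "real \<Rightarrow> real^'n^'r"
    and \<delta> \<mu> :: real
  assumes real_eig: "\<And>c. eigenvalue A c \<Longrightarrow> Im c = 0"
    and C_cont: "continuous_on {0..} C"
    and C_bdd: "bounded (C ` {0..})"
    and decomp: "A = S + N"
    and S_diag: "diagonalizable S"
    and N_nil: "nilpotent_index N s"
    and s_le: "s \<le> CARD('n)"
    and comm: "S ** N = N ** S"
    and sel_ok: "\<And>j. snd (sel j) < s"
    and O_def: "\<And>t. \<O> t = (\<chi> j. row (fst (sel j)) (C t ** mpow N (snd (sel j))))"
    and \<delta>_pos: "\<delta> > 0" and \<mu>_pos: "\<mu> > 0"
    and pe: "\<And>t. t \<ge> 0 \<Longrightarrow>
               mat_gt (integral {t..t+\<delta>} (\<lambda>\<tau>. transpose (\<O> \<tau>) ** \<O> \<tau>)) (\<mu> *\<^sub>R mat 1)"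
  shows "uniformly_observable A C"
proof -
  from S_diag obtain P :: "real^'n^'n" where P: "invertible P" "\<And>i j. i \<noteq> j \<Longrightarrow> (matrix_inv P ** S ** P) $ i $ j = 0"
    unfolding diagonalizable_def by auto
  have nilN: "mpow N s = 0" using N_nil by (simp add: nilpotent_index_def)
  interpret J: jc S N P s using P comm nilN by unfold_locales auto
  have TE: "trans_mat A \<tau> t = J.E (\<tau> - t)" for \<tau> t by (simp add: trans_mat_def J.E_def decomp)
  obtain B0 where B0: "B0 > 0" "\<And>\<tau>. \<tau> \<ge> 0 \<Longrightarrow> norm (C \<tau>) \<le> B0"
    using C_bdd unfolding bounded_pos by auto
  define BC where "BC = real CARD('m) * real CARD('n) * B0"
  have BC: "BC > 0" by (simp add: BC_def B0)
  have Cb: "norm (C \<tau> *v v) \<le> BC * norm v" if "\<tau> \<ge> 0" for \<tau> v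
  proof -
    have "norm (C \<tau> *v v) \<le> (real CARD('m) * real CARD('n) * norm (C \<tau>)) * norm v" by (rule mat_vec_bound)
    also have "\<dots> \<le> BC * norm v" unfolding BC_def using B0(2)[OF that]
      by (intro mult_right_mono mult_left_mono) auto
    finally show ?thesis .
  qed
  define cN where "cN = (\<Sum>k<s. real CARD('n) * real CARD('n) * norm (mpow N k))"
  have cN0: "cN \<ge> 0" unfolding cN_def by (intro sum_nonneg) auto
  have Nb: "norm (mpow N k *v v) \<le> cN * norm v" if "k < s" for k v
  proof -
    have "norm (mpow N k *v v) \<le> (real CARD('n) * real CARD('n) * norm (mpow N k)) * norm v" by (rule mat_vec_bound)
    also have "\<dots> \<le> cN * norm v" unfolding cN_def using that
      by (intro mult_right_mono member_le_sum) auto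
    finally show ?thesis .
  qed
  define R where "R = real CARD('r)"
  have R: "R > 0" by (simp add: R_def)
  define Q where "Q = 2 * R * (2 + cN^2) * BC^2 * \<delta>"
  have Q: "Q > 0" unfolding Q_def using R BC \<delta>_pos by (intro mult_pos_pos) (auto intro: add_pos_nonneg)
  define \<eta> where "\<eta> = min 1 (\<mu> / Q)"
  have eta: "\<eta> > 0" "\<eta> \<le> 1" "Q * \<eta> \<le> \<mu>"
    using Q \<mu>_pos by (auto simp: \<eta>_def min_def field_simps)
  have etasq: "R * ((2 + cN^2) * BC^2 * \<eta>^2) * \<delta> \<le> \<mu> / 2"
  proof -
    have "\<eta>^2 \<le> \<eta>" using eta by (simp add: power2_eq_square mult_le_cancel_right1)
    then have "R * ((2 + cN^2) * BC^2 * \<eta>^2) * \<delta> \<le> R * ((2 + cN^2) * BC^2 * \<eta>) * \<delta>"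
      using R \<delta>_pos by (intro mult_right_mono mult_left_mono) auto
    also have "\<dots> = Q * \<eta> / 2" by (simp add: Q_def)
    finally show ?thesis using eta(3) by simp
  qed
  obtain Lw where Lw: "Lw \<ge> 0" "\<And>y. norm y = 1 \<Longrightarrow> \<exists>a\<in>{0..Lw}.
       (\<forall>\<sigma>\<in>{0..\<delta>}. norm (J.uu y (a + \<sigma>) - J.uu y a) \<le> \<eta>) \<and> norm (N *v J.uu y a) \<le> \<eta>"
    using J.uniform_window[OF eta(1), of \<delta>] \<delta>_pos by auto
  obtain K2 where K2: "K2 > 0" "\<And>b v. b \<in> {0..Lw+\<delta>} \<Longrightarrow> norm v \<le> K2 * norm (J.E b *v v)"
    using J.E_lower[of 0 "Lw + \<delta>"] by blast
  define \<delta>' where "\<delta>' = Lw + \<delta>"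
  have d': "\<delta>' > 0" using Lw(1) \<delta>_pos by (simp add: \<delta>'_def)
  define \<kappa> where "\<kappa> = \<mu> / (4 * R * K2^2)"
  have kappa: "\<kappa> > 0" using \<mu>_pos R K2 by (simp add: \<kappa>_def)
  define g where "g t y \<tau> = norm (C \<tau> *v (J.E (\<tau> - t) *v y)) ^ 2" for t y \<tau>
  have Ecx: "continuous_on U (\<lambda>\<tau>. J.E (\<tau> - t) *v y)" for U t y
  proof -
    have "continuous_on U (\<lambda>\<tau>. J.E (\<tau> - t))"
      by (rule continuous_on_compose2[OF J.E_cont[of UNIV]]) (auto intro!: continuous_intros)
    then show ?thesis by (rule bounded_linear.continuous_on[OF bounded_linear_mvmul_left])
  qed
  have Ccont: "continuous_on U C" if "U \<subseteq> {0..}" for U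
    using C_cont that by (rule continuous_on_subset)
  have g_int: "g t y integrable_on {a..b}" if "0 \<le> a" for t y a b
  proof (rule integrable_continuous_interval)
    have "continuous_on {a..b} (\<lambda>\<tau>. C \<tau> *v (J.E (\<tau> - t) *v y))"
      using bounded_bilinear.continuous_on[OF bb_mv Ccont Ecx] that by auto
    then show "continuous_on {a..b} (g t y)" unfolding g_def by (intro continuous_intros)
  qed
  have g_nonneg: "g t y \<tau> \<ge> 0" for t y \<tau> by (simp add: g_def)
  define Fo where "Fo X = (\<chi> j. row (fst (sel j)) ((X::real^'n^'m) ** mpow N (snd (sel j))))" for X
  have Fo_bl: "bounded_linear Fo"
    unfolding linear_conv_bounded_linear[symmetric]
    by (rule linearI) (simp_all add: Fo_def vec_eq_iff row_def mmul_add_rdistrib scaleR_mmul)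
  have O_eq: "\<O> = (\<lambda>\<tau>. Fo (C \<tau>))" by (rule ext) (simp add: O_def Fo_def)
  have Ocont: "continuous_on U \<O>" if "U \<subseteq> {0..}" for U
    unfolding O_eq by (rule bounded_linear.continuous_on[OF Fo_bl Ccont[OF that]])
  have OO_int: "(\<lambda>\<tau>. transpose (\<O> \<tau>) ** \<O> \<tau>) integrable_on {a..b}" if "0 \<le> a" for a b
  proof (rule integrable_continuous_interval)
    have Oc: "continuous_on {a..b} \<O>" using that by (intro Ocont) auto
    have "continuous_on {a..b} (\<lambda>\<tau>. transpose (\<O> \<tau>))"
      by (rule bounded_linear.continuous_on[OF bl_transpose Oc])
    then show "continuous_on {a..b} (\<lambda>\<tau>. transpose (\<O> \<tau>) ** \<O> \<tau>)"
      using bounded_bilinear.continuous_on[OF bb_mm _ Oc] by simp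
  qed
  have Ou_int: "(\<lambda>\<tau>. norm (\<O> \<tau> *v u) ^ 2) integrable_on {a..b}" if "0 \<le> a" for a b u
  proof (rule integrable_continuous_interval)
    have "continuous_on {a..b} (\<lambda>\<tau>. \<O> \<tau> *v u)"
      using that by (intro bounded_linear.continuous_on[OF bounded_linear_mvmul_left] Ocont) auto
    then show "continuous_on {a..b} (\<lambda>\<tau>. norm (\<O> \<tau> *v u) ^ 2)" by (intro continuous_intros)
  qed
  have key: "\<kappa> \<le> integral {t..t+\<delta>'} (g t y)" if t0: "t \<ge> 0" and y1: "norm y = 1" for t y
  proof (rule ccontr)
    assume "\<not> ?thesis"
    then have less: "integral {t..t+\<delta>'} (g t y) < \<kappa>" by simp
    obtain a where a: "a \<in> {0..Lw}" "\<forall>\<sigma>\<in>{0..\<delta>}. norm (J.uu y (a + \<sigma>) - J.uu y a) \<le> \<eta>"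
        "norm (N *v J.uu y a) \<le> \<eta>"
      using Lw(2)[OF y1] by blast
    define u where "u = J.uu y a"
    have y0: "y \<noteq> 0" using y1 by auto
    have u1: "norm u = 1" using J.norm_uu[OF y0] by (simp add: u_def)
    have Nu: "norm (N *v u) \<le> \<eta>" using a(3) by (simp add: u_def)
    have pw: "norm (\<O> \<tau> *v u) ^ 2 \<le> R * (2 * K2^2 * g t y \<tau> + (2 + cN^2) * BC^2 * \<eta>^2)"
      if \<tau>: "\<tau> \<in> {t+a..t+a+\<delta>}" for \<tau>
    proof -
      have \<tau>0: "\<tau> \<ge> 0" using \<tau> t0 a(1) by auto
      define b where "b = \<tau> - t"
      have b: "b \<in> {0..Lw+\<delta>}" using \<tau> a(1) by (auto simp: b_def)
      have \<sigma>: "b - a \<in> {0..\<delta>}" using \<tau> by (auto simp: b_def)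
      define v where "v = J.E b *v y"
      have vne: "v \<noteq> 0" using J.E_nonzero[OF y0] by (simp add: v_def)
      have "1 \<le> K2 * norm v" using K2(2)[OF b, of y] y1 by (simp add: v_def)
      then have inv: "1 / norm v \<le> K2" using vne by (simp add: field_simps)
      have ub: "J.uu y b = (1 / norm v) *\<^sub>R v" by (simp add: J.uu_def v_def)
      have close: "norm (J.uu y b - u) \<le> \<eta>"
        using bspec[OF a(2) \<sigma>] by (simp add: u_def)
      have Cu: "norm (C \<tau> *v u) \<le> K2 * norm (C \<tau> *v v) + BC * \<eta>"
      proof -
        have "C \<tau> *v u = C \<tau> *v J.uu y b - C \<tau> *v (J.uu y b - u)"
          by (simp add: matrix_vector_mult_diff_distrib)
        then have "norm (C \<tau> *v u) \<le> norm (C \<tau> *v J.uu y b) + norm (C \<tau> *v (J.uu y b - u))"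
          by (metis norm_triangle_ineq4)
        moreover have "norm (C \<tau> *v J.uu y b) = (1 / norm v) * norm (C \<tau> *v v)"
          by (simp add: ub mvmul_scaleR)
        moreover have "(1 / norm v) * norm (C \<tau> *v v) \<le> K2 * norm (C \<tau> *v v)"
          using inv by (intro mult_right_mono) auto
        moreover have "norm (C \<tau> *v (J.uu y b - u)) \<le> BC * \<eta>"
          using Cb[OF \<tau>0, of "J.uu y b - u"] close BC by (meson mult_left_mono order_trans less_imp_le)
        ultimately show ?thesis by linarith
      qed
      have g_eq: "g t y \<tau> = norm (C \<tau> *v v) ^ 2" by (simp add: g_def v_def b_def)
      have k0: "norm (C \<tau> *v u) ^ 2 \<le> 2 * K2^2 * g t y \<tau> + 2 * BC^2 * \<eta>^2"
      proof -
        have "norm (C \<tau> *v u) ^ 2 \<le> (K2 * norm (C \<tau> *v v) + BC * \<eta>) ^ 2"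
          using Cu by (rule power_mono) simp
        also have "\<dots> \<le> 2 * (K2 * norm (C \<tau> *v v)) ^ 2 + 2 * (BC * \<eta>) ^ 2"
          by (rule sq_sum_le)
        finally show ?thesis by (simp add: g_eq power_mult_distrib)
      qed
      have kpos: "norm (C \<tau> *v (mpow N k *v u)) ^ 2 \<le> BC^2 * cN^2 * \<eta>^2" if k: "0 < k" "k < s" for k
      proof -
        have "mpow N k = mpow N (k - 1) ** N" using k mpow_Suc_right[of N "k - 1"] by simp
        then have eq: "mpow N k *v u = mpow N (k - 1) *v (N *v u)" by (simp add: matrix_vector_mul_assoc)
        have "norm (C \<tau> *v (mpow N k *v u)) \<le> BC * norm (mpow N k *v u)" by (rule Cb[OF \<tau>0])
        also have "\<dots> \<le> BC * (cN * norm (N *v u))"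
          unfolding eq using Nb[of "k - 1" "N *v u"] k BC by (intro mult_left_mono) auto
        also have "\<dots> \<le> BC * (cN * \<eta>)"
          using Nu BC cN0 by (intro mult_left_mono) auto
        finally have "norm (C \<tau> *v (mpow N k *v u)) \<le> BC * cN * \<eta>" by simp
        then have "norm (C \<tau> *v (mpow N k *v u)) ^ 2 \<le> (BC * cN * \<eta>) ^ 2"
          by (rule power_mono) simp
        then show ?thesis by (simp add: power_mult_distrib)
      qed
      have each: "norm (C \<tau> *v (mpow N (snd (sel j)) *v u)) ^ 2 \<le> 2 * K2^2 * g t y \<tau> + (2 + cN^2) * BC^2 * \<eta>^2" for j
      proof (cases "snd (sel j) = 0")
        case True
        have nn: "0 \<le> cN^2 * BC^2 * \<eta>^2" by simp
        have e2: "(2 + cN^2) * BC^2 * \<eta>^2 = 2 * BC^2 * \<eta>^2 + cN^2 * BC^2 * \<eta>^2"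
          by (simp add: algebra_simps)
        have e: "mpow N (snd (sel j)) *v u = u" using True by simp
        show ?thesis unfolding e using k0 nn e2 by linarith
      next
        case False
        then have "norm (C \<tau> *v (mpow N (snd (sel j)) *v u)) ^ 2 \<le> BC^2 * cN^2 * \<eta>^2"
          using kpos sel_ok by auto
        moreover have "0 \<le> 2 * K2^2 * g t y \<tau>" using g_nonneg by simp
        moreover have "0 \<le> 2 * BC^2 * \<eta>^2" by simp
        moreover have "(2 + cN^2) * BC^2 * \<eta>^2 = 2 * BC^2 * \<eta>^2 + BC^2 * cN^2 * \<eta>^2"
          by (simp add: algebra_simps)
        ultimately show ?thesis by linarith
      qed
      have "norm (\<O> \<tau> *v u) ^ 2 \<le> real CARD('r) * (2 * K2^2 * g t y \<tau> + (2 + cN^2) * BC^2 * \<eta>^2)"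
        unfolding O_def by (rule O_bound) (rule each)
      then show ?thesis by (simp add: R_def)
    qed
    have ta: "0 \<le> t + a" using t0 a(1) by auto
    have "u \<bullet> ((integral {t+a..t+a+\<delta>} (\<lambda>\<tau>. transpose (\<O> \<tau>) ** \<O> \<tau>) - \<mu> *\<^sub>R mat 1) *v u) > 0"
    proof -
      have "u \<noteq> 0" using u1 by auto
      then show ?thesis using pe[OF ta] unfolding mat_gt_def by blast
    qed
    moreover have "u \<bullet> ((integral {t+a..t+a+\<delta>} (\<lambda>\<tau>. transpose (\<O> \<tau>) ** \<O> \<tau>) - \<mu> *\<^sub>R mat 1) *v u)
        = integral {t+a..t+a+\<delta>} (\<lambda>\<tau>. norm (\<O> \<tau> *v u) ^ 2) - \<mu>"
    proof -
      have "u \<bullet> (integral {t+a..t+a+\<delta>} (\<lambda>\<tau>. transpose (\<O> \<tau>) ** \<O> \<tau>) *v u)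
          = integral {t+a..t+a+\<delta>} (\<lambda>\<tau>. norm (\<O> \<tau> *v u) ^ 2)"
        by (simp add: quad_integral[OF OO_int[OF ta]] quad_gram)
      moreover have "u \<bullet> ((\<mu> *\<^sub>R mat 1) *v u) = \<mu>"
        using u1 by (simp add: scaleR_mvmul power2_norm_eq_inner[symmetric])
      ultimately show ?thesis by (simp add: matrix_vector_mult_diff_rdistrib inner_diff_right)
    qed
    ultimately have pe1: "\<mu> < integral {t+a..t+a+\<delta>} (\<lambda>\<tau>. norm (\<O> \<tau> *v u) ^ 2)" by simp
    also have "\<dots> \<le> integral {t+a..t+a+\<delta>} (\<lambda>\<tau>. R * (2 * K2^2 * g t y \<tau> + (2 + cN^2) * BC^2 * \<eta>^2))"
    proof (rule integral_le[OF Ou_int[OF ta]])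
      show "(\<lambda>\<tau>. R * (2 * K2^2 * g t y \<tau> + (2 + cN^2) * BC^2 * \<eta>^2)) integrable_on {t+a..t+a+\<delta>}"
        using g_int[OF ta, of t y] by (intro integrable_on_mult_right integrable_add integrable_const_ivl) auto
    qed (rule pw)
    also have "\<dots> = R * (2 * K2^2 * integral {t+a..t+a+\<delta>} (g t y) + (2 + cN^2) * BC^2 * \<eta>^2 * \<delta>)"
    proof -
      have "integral {t+a..t+a+\<delta>} (\<lambda>\<tau>. 2 * K2^2 * g t y \<tau> + (2 + cN^2) * BC^2 * \<eta>^2)
          = 2 * K2^2 * integral {t+a..t+a+\<delta>} (g t y) + (2 + cN^2) * BC^2 * \<eta>^2 * \<delta>"
        using g_int[OF ta, of t y] \<delta>_pos
        by (subst integral_add) (auto intro: integrable_on_mult_left integrable_on_mult_right simp: mult.commute)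
      then show ?thesis by simp
    qed
    also have "\<dots> \<le> R * (2 * K2^2 * \<kappa> + (2 + cN^2) * BC^2 * \<eta>^2 * \<delta>)"
    proof -
      have "integral {t+a..t+a+\<delta>} (g t y) \<le> integral {t..t+\<delta>'} (g t y)"
        using a(1) t0 g_nonneg by (intro integral_subset_le g_int) (auto simp: \<delta>'_def)
      then have "integral {t+a..t+a+\<delta>} (g t y) \<le> \<kappa>" using less by simp
      then show ?thesis using R K2 by (intro mult_left_mono add_right_mono) auto
    qed
    also have "\<dots> = \<mu> / 2 + R * ((2 + cN^2) * BC^2 * \<eta>^2) * \<delta>"
      using R K2 by (simp add: \<kappa>_def field_simps)
    also have "\<dots> \<le> \<mu>" using etasq by simp
    finally show False by simp
  qed
  have fin: "0 \<le> x \<bullet> (((1 / \<delta>') *\<^sub>R integral {t..t + \<delta>'} (\<lambda>\<tau>. transpose (trans_mat A \<tau> t) ** transpose (C \<tau>) ** C \<tau> ** trans_mat A \<tau> t) - (\<kappa> / \<delta>') *\<^sub>R mat 1) *v x)"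
    if t0: "t \<ge> 0" for t x
  proof -
    define I where "I = integral {t..t + \<delta>'} (\<lambda>\<tau>. transpose (trans_mat A \<tau> t) ** transpose (C \<tau>) ** C \<tau> ** trans_mat A \<tau> t)"
    have int: "(\<lambda>\<tau>. transpose (trans_mat A \<tau> t) ** transpose (C \<tau>) ** C \<tau> ** trans_mat A \<tau> t) integrable_on {t..t + \<delta>'}"
    proof (rule integrable_continuous_interval)
      have E1: "continuous_on {t..t + \<delta>'} (\<lambda>\<tau>. trans_mat A \<tau> t)"
        unfolding TE by (rule continuous_on_compose2[OF J.E_cont[of UNIV]]) (auto intro!: continuous_intros)
      have E2: "continuous_on {t..t + \<delta>'} (\<lambda>\<tau>. transpose (trans_mat A \<tau> t))"
        by (rule bounded_linear.continuous_on[OF bl_transpose E1])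
      have C1: "continuous_on {t..t + \<delta>'} C" using t0 by (intro Ccont) auto
      have C2: "continuous_on {t..t + \<delta>'} (\<lambda>\<tau>. transpose (C \<tau>))"
        by (rule bounded_linear.continuous_on[OF bl_transpose C1])
      have "continuous_on {t..t + \<delta>'} (\<lambda>\<tau>. transpose (trans_mat A \<tau> t) ** transpose (C \<tau>))"
        using bounded_bilinear.continuous_on[OF bb_mm E2 C2] by simp
      then have "continuous_on {t..t + \<delta>'} (\<lambda>\<tau>. transpose (trans_mat A \<tau> t) ** transpose (C \<tau>) ** C \<tau>)"
        using bounded_bilinear.continuous_on[OF bb_mm _ C1] by simp
      then show "continuous_on {t..t + \<delta>'} (\<lambda>\<tau>. transpose (trans_mat A \<tau> t) ** transpose (C \<tau>) ** C \<tau> ** trans_mat A \<tau> t)"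
        using bounded_bilinear.continuous_on[OF bb_mm _ E1] by simp
    qed
    have xI: "x \<bullet> (I *v x) = integral {t..t + \<delta>'} (g t x)"
      unfolding I_def quad_integral[OF int] quad_uo by (simp add: TE g_def[abs_def])
    have low: "\<kappa> * norm x ^ 2 \<le> integral {t..t + \<delta>'} (g t x)"
    proof (cases "x = 0")
      case True
      then show ?thesis by (simp add: g_def[abs_def])
    next
      case False
      define y where "y = (1 / norm x) *\<^sub>R x"
      have y1: "norm y = 1" using False by (simp add: y_def)
      have xy: "x = norm x *\<^sub>R y" using False by (simp add: y_def)
      have "g t x = (\<lambda>\<tau>. norm x ^ 2 * g t y \<tau>)"
      proof (rule ext)
        fix \<tau>
        have "C \<tau> *v (J.E (\<tau> - t) *v x) = norm x *\<^sub>R (C \<tau> *v (J.E (\<tau> - t) *v y))"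
          by (subst xy) (simp add: mvmul_scaleR)
        then show "g t x \<tau> = norm x ^ 2 * g t y \<tau>" by (simp add: g_def power_mult_distrib)
      qed
      then have "integral {t..t + \<delta>'} (g t x) = norm x ^ 2 * integral {t..t + \<delta>'} (g t y)" by simp
      moreover have "\<kappa> \<le> integral {t..t + \<delta>'} (g t y)" by (rule key[OF t0 y1])
      ultimately show ?thesis
        by (metis mult.commute mult_left_mono zero_le_power2)
    qed
    have "x \<bullet> (((1 / \<delta>') *\<^sub>R I - (\<kappa> / \<delta>') *\<^sub>R mat 1) *v x) = (x \<bullet> (I *v x) - \<kappa> * norm x ^ 2) / \<delta>'"
      by (simp add: matrix_vector_mult_diff_rdistrib inner_diff_right scaleR_mvmul power2_norm_eq_inner diff_divide_distrib)
    also have "\<dots> \<ge> 0" using xI low d' by simp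
    finally show ?thesis unfolding I_def .
  qed
  show ?thesis
    unfolding uniformly_observable_def mat_ge_def
    apply (rule exI[of _ \<delta>'])
    apply (rule conjI[OF d'])
    apply (rule exI[of _ "\<kappa> / \<delta>'"])
    using kappa d' fin by auto
qed


end
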